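(* There exists $\Lambda>0$ such that for each $K\ge1$ there exists $\nu_K>0$ such that any collection of $\Lambda K$ or more distinct squares in $Col_K$ is $\nu_K$-transverse.
   Context: $Col_K$ is the collection of closed dyadic squares of side length $1/K$ in $[0,1]^2$ ($K$ a power of 2). For a polynomial $P(r,s)$, $\|P\|$ is the $\ell^1$ sum of its coefficients. With $M\ge1000$, sets $S_1,\dots,S_M\subset[0,1]^2$ are $\nu$-transverse if for every polynomial $P$ with $\deg P\le100$ and $\|P\|=1$ and every choice of $\frac M{100}$ different sets $S_{i_1},\dots,S_{i_{M/100}}$ there is at least one $S_{i_j}$ with $|P(r,s)|\ge\nu$ for all $(r,s)\in S_{i_j}$. *)

theory Defs
  imports Complex_Main
begin

definition dyadic_square :: "nat \<Rightarrow> nat \<Rightarrow> nat \<Rightarrow> (real \<times> real) set" where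
  "dyadic_square K a b = {(r, s). real a / real K \<le> r \<and> r \<le> (real a + 1) / real K
                                \<and> real b / real K \<le> s \<and> s \<le> (real b + 1) / real K}"

definition Col :: "nat \<Rightarrow> (real \<times> real) set set" where
  "Col K = {dyadic_square K a b | a b. a < K \<and> b < K}"

text \<open>A bivariate real polynomial of degree at most 100 is given by its coefficients
  c i j (coefficient of r^i s^j), only those with i + j \<le> 100 matter.\<close>
definition poly2 :: "(nat \<Rightarrow> nat \<Rightarrow> real) \<Rightarrow> real \<Rightarrow> real \<Rightarrow> real" where
  "poly2 c r s = (\<Sum>i\<le>100. \<Sum>j\<le>100 - i. c i j * r ^ i * s ^ j)"

definition pnorm :: "(nat \<Rightarrow> nat \<Rightarrow> real) \<Rightarrow> real" where
  "pnorm c = (\<Sum>i\<le>100. \<Sum>j\<le>100 - i. \<bar>c i j\<bar>)"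

text \<open>A finite family C of M = card C \<ge> 1000 distinct sets is nu-transverse if for every
  polynomial of degree \<le> 100 with norm 1 and every choice of M/100 of the sets
  (equivalently, by monotonicity, at least M/100 of them), one of the chosen sets
  has |P| \<ge> nu everywhere on it.\<close>
definition transverse :: "real \<Rightarrow> (real \<times> real) set set \<Rightarrow> bool" where
  "transverse \<nu> C \<longleftrightarrow> finite C \<and> card C \<ge> 1000 \<and>
     (\<forall>c. pnorm c = 1 \<longrightarrow>
       (\<forall>I \<subseteq> C. real (card I) \<ge> real (card C) / 100 \<longrightarrow>
          (\<exists>S\<in>I. \<forall>(r, s)\<in>S. \<bar>poly2 c r s\<bar> \<ge> \<nu>)))"

end

theory Submission
  imports Defs "HOL-Analysis.Analysis"
begin

definition Q :: "nat \<Rightarrow> nat \<Rightarrow> (nat \<Rightarrow> nat \<Rightarrow> real) \<Rightarrow> real \<Rightarrow> real \<Rightarrow> real" where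
  "Q D n c r s = (\<Sum>i\<le>n. \<Sum>j\<le>D. c i j * r ^ i * s ^ j)"

definition rowsZ :: "nat \<Rightarrow> (real \<Rightarrow> real) \<Rightarrow> nat set" where
  "rowsZ K g = {b. b < K \<and> (\<exists>s. real b / real K \<le> s \<and> s \<le> (real b + 1) / real K \<and> g s = 0)}"

lemma rowsZ_le_K: "card (rowsZ K g) \<le> K"
proof -
  have "rowsZ K g \<subseteq> {..<K}" by (auto simp: rowsZ_def)
  then show ?thesis by (metis card_lessThan card_mono finite_lessThan)
qed

lemma floor_cases:
  fixes x :: real and b :: nat
  assumes "real b \<le> x" "x \<le> real b + 1"
  shows "b = nat \<lfloor>x\<rfloor> \<or> b = nat \<lfloor>x\<rfloor> - 1"
proof -
  have "int b \<le> \<lfloor>x\<rfloor>" using assms(1) by (simp add: le_floor_iff)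
  moreover have "\<lfloor>x\<rfloor> \<le> int b + 1" using assms(2) by (simp add: floor_le_iff)
  ultimately show ?thesis by linarith
qed

lemma rowsZ_poly:
  fixes e :: "nat \<Rightarrow> real"
  assumes K: "K \<ge> 1" and nz: "\<exists>j\<le>m. e j \<noteq> 0"
  shows "card (rowsZ K (\<lambda>s. \<Sum>j\<le>m. e j * s ^ j)) \<le> 2 * m"
proof -
  define R where "R = {z. (\<Sum>j\<le>m. e j * z ^ j) = 0}"
  from nz obtain k where k: "e k \<noteq> 0" "k \<le> m" by blast
  have fR: "finite R" and cR: "card R \<le> m"
    using polyfun_roots_finite[of e k m, OF k] polyfun_roots_card[of e k m, OF k] by (auto simp: R_def)
  have sub: "rowsZ K (\<lambda>s. \<Sum>j\<le>m. e j * s ^ j) \<subseteq> (\<Union>x\<in>R. {nat \<lfloor>x * real K\<rfloor>, nat \<lfloor>x * real K\<rfloor> - 1})"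
  proof
    fix b assume "b \<in> rowsZ K (\<lambda>s. \<Sum>j\<le>m. e j * s ^ j)"
    then obtain s where s: "real b / real K \<le> s" "s \<le> (real b + 1) / real K" "(\<Sum>j\<le>m. e j * s ^ j) = 0"
      by (auto simp: rowsZ_def)
    have Kp: "real K > 0" using K by simp
    have "real b \<le> s * real K" using s(1) Kp by (simp add: divide_le_eq)
    moreover have "s * real K \<le> real b + 1" using s(2) Kp by (simp add: le_divide_eq)
    ultimately have "b = nat \<lfloor>s * real K\<rfloor> \<or> b = nat \<lfloor>s * real K\<rfloor> - 1" by (rule floor_cases)
    moreover have "s \<in> R" using s(3) by (simp add: R_def)
    ultimately show "b \<in> (\<Union>x\<in>R. {nat \<lfloor>x * real K\<rfloor>, nat \<lfloor>x * real K\<rfloor> - 1})" by blast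
  qed
  have "card (rowsZ K (\<lambda>s. \<Sum>j\<le>m. e j * s ^ j)) \<le> card (\<Union>x\<in>R. {nat \<lfloor>x * real K\<rfloor>, nat \<lfloor>x * real K\<rfloor> - 1})"
    by (rule card_mono[OF _ sub]) (use fR in auto)
  also have "\<dots> \<le> (\<Sum>x\<in>R. card {nat \<lfloor>x * real K\<rfloor>, nat \<lfloor>x * real K\<rfloor> - 1})"
    by (rule card_UN_le[OF fR])
  also have "\<dots> \<le> (\<Sum>x\<in>R. 2)"
    by (rule sum_mono) (simp add: card_insert_le_m1)
  also have "\<dots> = 2 * card R" by simp
  also have "\<dots> \<le> 2 * m" using cR by simp
  finally show ?thesis .
qed

lemma sum_bad_bound:
  fixes h :: "nat \<Rightarrow> nat"
  assumes "finite A" "B \<subseteq> A" "card B \<le> n" "\<And>a. a \<in> A \<Longrightarrow> h a \<le> K" "\<And>a. a \<in> A - B \<Longrightarrow> h a \<le> M"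
  shows "sum h A \<le> n * K + card A * M"
proof -
  have fB: "finite B" using assms(1,2) finite_subset by blast
  have "sum h A = sum h B + sum h (A - B)"
    using assms(1,2) by (metis sum.subset_diff add.commute)
  also have "sum h B \<le> card B * K" using sum_bounded_above[of B h K] assms(2,4) by auto
  also have "sum h (A - B) \<le> card (A - B) * M" using sum_bounded_above[of "A - B" h M] assms(5) by auto
  also have "card B * K \<le> n * K" using assms(3) by simp
  also have "card (A - B) * M \<le> card A * M"
    using assms(1) by (simp add: card_Diff_subset fB assms(2))
  finally show ?thesis by simp
qed

definition nz :: "nat \<Rightarrow> nat \<Rightarrow> (nat \<Rightarrow> nat \<Rightarrow> real) \<Rightarrow> bool" where
  "nz D n c \<longleftrightarrow> (\<exists>i\<le>n. \<exists>j\<le>D. c i j \<noteq> 0)"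

definition Bd :: "nat \<Rightarrow> nat \<Rightarrow> (nat \<Rightarrow> nat \<Rightarrow> real) \<Rightarrow> nat \<Rightarrow> (nat \<times> nat) set" where
  "Bd D n c K = {(a,b). a < K \<and> b < K \<and> (\<exists>r s. real a / real K \<le> r \<and> r \<le> (real a + 1) / real K
      \<and> real b / real K \<le> s \<and> s \<le> (real b + 1) / real K
      \<and> (r = real a / real K \<or> r = (real a + 1) / real K \<or> s = real b / real K \<or> s = (real b + 1) / real K)
      \<and> Q D n c r s = 0)}"

lemma Q_in_s: "Q D n c x s = (\<Sum>j\<le>D. (\<Sum>i\<le>n. c i j * x ^ i) * s ^ j)"
  unfolding Q_def by (simp add: sum.swap[of _ "{..n}"] sum_distrib_right sum_distrib_left mult_ac)

lemma Q_in_r: "Q D n c r y = (\<Sum>i\<le>n. (\<Sum>j\<le>D. c i j * y ^ j) * r ^ i)"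
  unfolding Q_def by (simp add: sum_distrib_right sum_distrib_left mult_ac)

lemma sum_shift_le: "(\<Sum>a<K. h a) + (\<Sum>a<K. h (Suc a)) \<le> 2 * (\<Sum>a\<le>K. (h::nat\<Rightarrow>nat) a)"
proof -
  have "(\<Sum>a<K. h a) \<le> (\<Sum>a\<le>K. h a)" by (rule sum_mono2) auto
  moreover have "(\<Sum>a<K. h (Suc a)) \<le> (\<Sum>a\<le>K. h a)"
  proof -
    have "(\<Sum>a\<le>K. h a) = (\<Sum>a<Suc K. h a)" by (simp add: lessThan_Suc_atMost)
    also have "\<dots> = h 0 + (\<Sum>a<K. h (Suc a))" by (rule sum.lessThan_Suc_shift)
    finally show ?thesis by simp
  qed
  ultimately show ?thesis by simp
qed

lemma lines_bound:
  fixes c :: "nat \<Rightarrow> nat \<Rightarrow> real"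
  assumes K: "K \<ge> 1" and nz: "\<exists>i\<le>n. \<exists>j\<le>D. c i j \<noteq> 0"
  shows "(\<Sum>a\<le>K. card (rowsZ K (\<lambda>s. \<Sum>j\<le>D. (\<Sum>i\<le>n. c i j * (real a / real K) ^ i) * s ^ j)))
          \<le> n * K + (K + 1) * (2 * D)"
proof -
  define B where "B = {a\<in>{..K}. \<forall>j\<le>D. (\<Sum>i\<le>n. c i j * (real a / real K) ^ i) = 0}"
  from nz obtain i0 j0 where ij: "i0 \<le> n" "j0 \<le> D" "c i0 j0 \<noteq> 0" by blast
  have cB: "card B \<le> n"
  proof -
    define R where "R = {z. (\<Sum>i\<le>n. c i j0 * z ^ i) = 0}"
    have fR: "finite R" and cR: "card R \<le> n"
      using polyfun_roots_finite[of "\<lambda>i. c i j0" i0 n] polyfun_roots_card[of "\<lambda>i. c i j0" i0 n] ij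
      by (auto simp: R_def)
    have inj: "inj_on (\<lambda>a. real a / real K) B" using K by (auto simp: inj_on_def)
    have "(\<lambda>a. real a / real K) ` B \<subseteq> R" using ij(2) by (auto simp: B_def R_def)
    then have "card ((\<lambda>a. real a / real K) ` B) \<le> card R" by (rule card_mono[OF fR])
    then show ?thesis using card_image[OF inj] cR by simp
  qed
  have "(\<Sum>a\<le>K. card (rowsZ K (\<lambda>s. \<Sum>j\<le>D. (\<Sum>i\<le>n. c i j * (real a / real K) ^ i) * s ^ j)))
          \<le> n * K + card {..K} * (2 * D)"
  proof (rule sum_bad_bound[where B=B])
    show "finite {..K}" by simp
    show "B \<subseteq> {..K}" by (auto simp: B_def)
    show "card B \<le> n" by (rule cB)
    show "\<And>a. card (rowsZ K (\<lambda>s. \<Sum>j\<le>D. (\<Sum>i\<le>n. c i j * (real a / real K) ^ i) * s ^ j)) \<le> K"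
      by (rule rowsZ_le_K)
    fix a assume "a \<in> {..K} - B"
    then have "\<exists>j\<le>D. (\<Sum>i\<le>n. c i j * (real a / real K) ^ i) \<noteq> 0" by (auto simp: B_def)
    from rowsZ_poly[OF K this]
    show "card (rowsZ K (\<lambda>s. \<Sum>j\<le>D. (\<Sum>i\<le>n. c i j * (real a / real K) ^ i) * s ^ j)) \<le> 2 * D" .
  qed
  then show ?thesis by simp
qed

lemma card_V:
  fixes g :: "nat \<Rightarrow> nat set"
  assumes "\<And>a. finite (g a)"
  shows "card (\<Union>a\<in>{..<K}. {a} \<times> (g a \<union> g (Suc a))) \<le> 2 * (\<Sum>a\<le>K. card (g a))"
proof -
  have "card (\<Union>a\<in>{..<K}. {a} \<times> (g a \<union> g (Suc a))) \<le> (\<Sum>a<K. card ({a} \<times> (g a \<union> g (Suc a))))"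
    by (rule card_UN_le) simp
  also have "\<dots> \<le> (\<Sum>a<K. card (g a) + card (g (Suc a)))"
    by (rule sum_mono) (simp add: card_cartesian_product card_Un_le)
  also have "\<dots> = (\<Sum>a<K. card (g a)) + (\<Sum>a<K. card (g (Suc a)))" by (simp add: sum.distrib)
  also have "\<dots> \<le> 2 * (\<Sum>a\<le>K. card (g a))" by (rule sum_shift_le)
  finally show ?thesis .
qed

lemma card_H:
  fixes g :: "nat \<Rightarrow> nat set"
  assumes "\<And>a. finite (g a)"
  shows "card (\<Union>a\<in>{..<K}. (g a \<union> g (Suc a)) \<times> {a}) \<le> 2 * (\<Sum>a\<le>K. card (g a))"
proof -
  have "card (\<Union>a\<in>{..<K}. (g a \<union> g (Suc a)) \<times> {a}) \<le> (\<Sum>a<K. card ((g a \<union> g (Suc a)) \<times> {a}))"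
    by (rule card_UN_le) simp
  also have "\<dots> \<le> (\<Sum>a<K. card (g a) + card (g (Suc a)))"
    by (rule sum_mono) (simp add: card_cartesian_product card_Un_le)
  also have "\<dots> = (\<Sum>a<K. card (g a)) + (\<Sum>a<K. card (g (Suc a)))" by (simp add: sum.distrib)
  also have "\<dots> \<le> 2 * (\<Sum>a\<le>K. card (g a))" by (rule sum_shift_le)
  finally show ?thesis .
qed

lemma finite_rowsZ: "finite (rowsZ K g)"
  by (rule finite_subset[of _ "{..<K}"]) (auto simp: rowsZ_def)

lemma Bd_card:
  assumes K: "K \<ge> 1" and nzc: "nz D n c"
  shows "card (Bd D n c K) \<le> 10 * (D + n) * K"
proof -
  define g where "g a = rowsZ K (\<lambda>s. Q D n c (real a / real K) s)" for a
  define h where "h b = rowsZ K (\<lambda>r. Q D n c r (real b / real K))" for b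
  have fg: "\<And>a. finite (g a)" and fh: "\<And>a. finite (h a)" by (auto simp: g_def h_def finite_rowsZ)
  have sub: "Bd D n c K \<subseteq> (\<Union>a\<in>{..<K}. {a} \<times> (g a \<union> g (Suc a))) \<union> (\<Union>b\<in>{..<K}. (h b \<union> h (Suc b)) \<times> {b})"
  proof
    fix p assume "p \<in> Bd D n c K"
    then obtain a b r s where p: "p = (a,b)" "a < K" "b < K" "real a / real K \<le> r" "r \<le> (real a + 1) / real K"
      "real b / real K \<le> s" "s \<le> (real b + 1) / real K"
      "r = real a / real K \<or> r = (real a + 1) / real K \<or> s = real b / real K \<or> s = (real b + 1) / real K"
      "Q D n c r s = 0" unfolding Bd_def by blast
    from p(8) show "p \<in> (\<Union>a\<in>{..<K}. {a} \<times> (g a \<union> g (Suc a))) \<union> (\<Union>b\<in>{..<K}. (h b \<union> h (Suc b)) \<times> {b})"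
    proof (elim disjE)
      assume "r = real a / real K"
      then have "b \<in> g a" using p by (auto simp: g_def rowsZ_def)
      then show ?thesis using p by blast
    next
      assume "r = (real a + 1) / real K"
      then have "b \<in> g (Suc a)" using p by (auto simp: g_def rowsZ_def add.commute)
      then show ?thesis using p by blast
    next
      assume "s = real b / real K"
      then have "a \<in> h b" using p by (auto simp: h_def rowsZ_def)
      then show ?thesis using p by blast
    next
      assume "s = (real b + 1) / real K"
      then have "a \<in> h (Suc b)" using p by (auto simp: h_def rowsZ_def add.commute)
      then show ?thesis using p by blast
    qed
  qed
  have nz': "\<exists>i\<le>n. \<exists>j\<le>D. c i j \<noteq> 0" using nzc by (simp add: nz_def)
  have nz'': "\<exists>i\<le>D. \<exists>j\<le>n. (\<lambda>i j. c j i) i j \<noteq> 0" using nz' by blast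
  have gs: "(\<Sum>a\<le>K. card (g a)) \<le> n * K + (K + 1) * (2 * D)"
    using lines_bound[OF K nz'] by (simp add: g_def Q_in_s)
  have hs: "(\<Sum>a\<le>K. card (h a)) \<le> D * K + (K + 1) * (2 * n)"
    using lines_bound[OF K nz''] by (simp add: h_def Q_in_r)
  have "card (Bd D n c K) \<le> card ((\<Union>a\<in>{..<K}. {a} \<times> (g a \<union> g (Suc a))) \<union> (\<Union>b\<in>{..<K}. (h b \<union> h (Suc b)) \<times> {b}))"
    by (rule card_mono[OF _ sub]) (simp add: fg fh)
  also have "\<dots> \<le> card (\<Union>a\<in>{..<K}. {a} \<times> (g a \<union> g (Suc a))) + card (\<Union>b\<in>{..<K}. (h b \<union> h (Suc b)) \<times> {b})"
    by (rule card_Un_le)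
  also have "\<dots> \<le> 2 * (n * K + (K + 1) * (2 * D)) + 2 * (D * K + (K + 1) * (2 * n))"
  proof (rule add_mono)
    show "card (\<Union>a\<in>{..<K}. {a} \<times> (g a \<union> g (Suc a))) \<le> 2 * (n * K + (K + 1) * (2 * D))"
      using card_V[of g K, OF fg] gs by (meson le_trans mult_le_mono2)
    show "card (\<Union>b\<in>{..<K}. (h b \<union> h (Suc b)) \<times> {b}) \<le> 2 * (D * K + (K + 1) * (2 * n))"
      using card_H[of h K, OF fh] hs by (meson le_trans mult_le_mono2)
  qed
  also have "\<dots> \<le> 10 * (D + n) * K"
  proof -
    have a: "D \<le> D * K" "n \<le> n * K" using K by simp_all
    have "2 * (n * K + (K + 1) * (2 * D)) + 2 * (D * K + (K + 1) * (2 * n)) = 6 * (D * K) + 6 * (n * K) + 4 * D + 4 * n"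
      by (simp add: algebra_simps)
    also have "\<dots> \<le> 10 * (D * K) + 10 * (n * K)" using a by linarith
    also have "\<dots> = 10 * (D + n) * K" by (simp add: algebra_simps)
    finally show ?thesis .
  qed
  finally show ?thesis .
qed

lemma ivt_pos:
  fixes g :: "real \<Rightarrow> real"
  assumes "a \<le> b" "continuous_on UNIV g" "g a > 0" "\<And>t. a \<le> t \<Longrightarrow> t \<le> b \<Longrightarrow> g t \<noteq> 0"
  shows "g b > 0"
proof (rule ccontr)
  assume "\<not> g b > 0"
  then have "g b \<le> 0" by simp
  moreover have "\<forall>x. a \<le> x \<and> x \<le> b \<longrightarrow> isCont g x"
    using assms(2) by (simp add: continuous_on_eq_continuous_at)
  ultimately obtain x where "a \<le> x" "x \<le> b" "g x = 0"
    using IVT2[of g b 0 a] assms(1,3) by auto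
  then show False using assms(4) by blast
qed

lemma crit_pos:
  fixes f f' :: "real \<Rightarrow> real \<Rightarrow> real"
  assumes lt: "x0 < x1" "y0 < y1"
    and cont: "continuous_on UNIV (\<lambda>p. f (fst p) (snd p))"
    and ctr: "\<And>s. continuous_on UNIV (\<lambda>r. f r s)"
    and cts: "\<And>r. continuous_on UNIV (\<lambda>s. f r s)"
    and der: "\<And>r s. ((\<lambda>r. f r s) has_real_derivative f' r s) (at r)"
    and z: "x0 \<le> r0" "r0 \<le> x1" "y0 \<le> s0" "s0 \<le> y1" "f r0 s0 = 0"
    and noedge: "\<And>r s. x0 \<le> r \<Longrightarrow> r \<le> x1 \<Longrightarrow> y0 \<le> s \<Longrightarrow> s \<le> y1 \<Longrightarrow>
        (r = x0 \<or> r = x1 \<or> s = y0 \<or> s = y1) \<Longrightarrow> f r s \<noteq> 0"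
    and pos: "f x0 y0 > 0"
  shows "\<exists>r s. x0 \<le> r \<and> r \<le> x1 \<and> y0 \<le> s \<and> s \<le> y1 \<and> f' r s = 0"
proof -
  have L: "f x0 s > 0" if "y0 \<le> s" "s \<le> y1" for s
    using ivt_pos[of y0 s "\<lambda>t. f x0 t"] that pos cts noedge lt by auto
  have B: "f r y0 > 0" if "x0 \<le> r" "r \<le> x1" for r
    using ivt_pos[of x0 r "\<lambda>t. f t y0"] that pos ctr noedge lt by auto
  have T: "f r y1 > 0" if "x0 \<le> r" "r \<le> x1" for r
    using ivt_pos[of x0 r "\<lambda>t. f t y1"] that L[of y1] ctr noedge lt by auto
  have R: "f x1 s > 0" if "y0 \<le> s" "s \<le> y1" for s
    using ivt_pos[of y0 s "\<lambda>t. f x1 t"] that B[of x1] cts noedge lt by auto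
  define S where "S = {x0..x1} \<times> {y0..y1}"
  have "compact S" unfolding S_def by (intro compact_Times compact_Icc)
  moreover have "S \<noteq> {}" using lt by (auto simp: S_def)
  moreover have "continuous_on S (\<lambda>p. f (fst p) (snd p))" using cont continuous_on_subset by blast
  ultimately obtain p where p: "p \<in> S" "\<And>q. q \<in> S \<Longrightarrow> f (fst p) (snd p) \<le> f (fst q) (snd q)"
    using continuous_attains_inf[of S "\<lambda>p. f (fst p) (snd p)"] by blast
  obtain rr ss where pe: "p = (rr, ss)" by (cases p)
  have rs: "x0 \<le> rr" "rr \<le> x1" "y0 \<le> ss" "ss \<le> y1" using p(1) by (auto simp: S_def pe)
  have le0: "f rr ss \<le> 0" using p(2)[of "(r0,s0)"] z by (auto simp: S_def pe)
  have "rr \<noteq> x0" using L[OF rs(3,4)] le0 by auto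
  moreover have "rr \<noteq> x1" using R[OF rs(3,4)] le0 by auto
  ultimately have int: "x0 < rr" "rr < x1" using rs by auto
  have "f' rr ss = 0"
  proof (rule DERIV_local_min[OF der])
    show "0 < min (rr - x0) (x1 - rr)" using int by simp
    show "\<forall>y. \<bar>rr - y\<bar> < min (rr - x0) (x1 - rr) \<longrightarrow> f rr ss \<le> f y ss"
    proof (intro allI impI)
      fix y assume "\<bar>rr - y\<bar> < min (rr - x0) (x1 - rr)"
      then have "(y, ss) \<in> S" using rs by (auto simp: S_def)
      then show "f rr ss \<le> f y ss" using p(2)[of "(y,ss)"] by (simp add: pe)
    qed
  qed
  then show ?thesis using rs by blast
qed

lemma crit:
  fixes f f' :: "real \<Rightarrow> real \<Rightarrow> real"
  assumes lt: "x0 < x1" "y0 < y1"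
    and cont: "continuous_on UNIV (\<lambda>p. f (fst p) (snd p))"
    and ctr: "\<And>s. continuous_on UNIV (\<lambda>r. f r s)"
    and cts: "\<And>r. continuous_on UNIV (\<lambda>s. f r s)"
    and der: "\<And>r s. ((\<lambda>r. f r s) has_real_derivative f' r s) (at r)"
    and z: "x0 \<le> r0" "r0 \<le> x1" "y0 \<le> s0" "s0 \<le> y1" "f r0 s0 = 0"
    and noedge: "\<And>r s. x0 \<le> r \<Longrightarrow> r \<le> x1 \<Longrightarrow> y0 \<le> s \<Longrightarrow> s \<le> y1 \<Longrightarrow>
        (r = x0 \<or> r = x1 \<or> s = y0 \<or> s = y1) \<Longrightarrow> f r s \<noteq> 0"
  shows "\<exists>r s. x0 \<le> r \<and> r \<le> x1 \<and> y0 \<le> s \<and> s \<le> y1 \<and> f' r s = 0"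
proof (cases "f x0 y0 > 0")
  case True
  then show ?thesis using crit_pos[OF assms] by blast
next
  case False
  then have "f x0 y0 < 0" using noedge[of x0 y0] lt by force
  then have pos: "(\<lambda>r s. - f r s) x0 y0 > 0" by simp
  have "\<exists>r s. x0 \<le> r \<and> r \<le> x1 \<and> y0 \<le> s \<and> s \<le> y1 \<and> (\<lambda>r s. - f' r s) r s = 0"
  proof (rule crit_pos[where f="\<lambda>r s. - f r s" and f'="\<lambda>r s. - f' r s", OF lt])
    show "continuous_on UNIV (\<lambda>p. - f (fst p) (snd p))" using cont by (intro continuous_intros)
    show "\<And>s. continuous_on UNIV (\<lambda>r. - f r s)" using ctr by (intro continuous_intros)
    show "\<And>r. continuous_on UNIV (\<lambda>s. - f r s)" using cts by (intro continuous_intros)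
    show "\<And>r s. ((\<lambda>r. - f r s) has_real_derivative - f' r s) (at r)" using der by (intro DERIV_minus)
  qed (use z noedge pos in auto)
  then show ?thesis by auto
qed

definition dc :: "(nat \<Rightarrow> nat \<Rightarrow> real) \<Rightarrow> nat \<Rightarrow> nat \<Rightarrow> real" where
  "dc c i j = real (Suc i) * c (Suc i) j"

definition Zs :: "nat \<Rightarrow> nat \<Rightarrow> (nat \<Rightarrow> nat \<Rightarrow> real) \<Rightarrow> nat \<Rightarrow> (nat \<times> nat) set" where
  "Zs D n c K = {(a,b). a < K \<and> b < K \<and> (\<exists>r s. real a / real K \<le> r \<and> r \<le> (real a + 1) / real K
      \<and> real b / real K \<le> s \<and> s \<le> (real b + 1) / real K \<and> Q D n c r s = 0)}"

lemma Q_deriv: "((\<lambda>r. Q D (Suc m) c r s) has_real_derivative Q D m (dc c) r s) (at r)"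
proof -
  have "((\<lambda>r. Q D (Suc m) c r s) has_real_derivative
      (\<Sum>i\<le>Suc m. \<Sum>j\<le>D. c i j * (real i * r ^ (i - 1)) * s ^ j)) (at r)"
    unfolding Q_def
    by (rule DERIV_sum, rule DERIV_sum, auto intro!: derivative_eq_intros)
  moreover have "(\<Sum>i\<le>Suc m. \<Sum>j\<le>D. c i j * (real i * r ^ (i - 1)) * s ^ j) = Q D m (dc c) r s"
    by (simp add: sum.atMost_Suc_shift[of _ m] Q_def dc_def mult_ac del: sum.atMost_Suc)
  ultimately show ?thesis by simp
qed

lemma Q_cont1: "continuous_on UNIV (\<lambda>p. Q D n c (fst p) (snd p))"
  unfolding Q_def by (intro continuous_intros)
lemma Q_cont2: "continuous_on UNIV (\<lambda>r. Q D n c r s)"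
  unfolding Q_def by (intro continuous_intros)
lemma Q_cont3: "continuous_on UNIV (\<lambda>s. Q D n c r s)"
  unfolding Q_def by (intro continuous_intros)

lemma Q_const0: "Q D 0 c r s = Q D 0 c r' s"
  by (simp add: Q_def)

lemma Q_const:
  assumes "\<not> nz D m (dc c)"
  shows "Q D (Suc m) c r s = Q D (Suc m) c r' s"
proof -
  have z: "c (Suc i) j = 0" if "i \<le> m" "j \<le> D" for i j
    using assms that by (auto simp: nz_def dc_def)
  have "Q D (Suc m) c r s = (\<Sum>j\<le>D. c 0 j * s ^ j)" for r
    using z by (simp add: Q_def sum.atMost_Suc_shift[of _ m] del: sum.atMost_Suc)
  then show ?thesis by simp
qed

lemma Zs_sub:
  assumes K: "K \<ge> 1"
  shows "Zs D n c K \<subseteq> Bd D n c K \<union> {p. \<exists>m. n = Suc m \<and> nz D m (dc c) \<and> p \<in> Zs D m (dc c) K}"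
proof
  fix p assume "p \<in> Zs D n c K"
  then obtain a b r s where p: "p = (a,b)" "a < K" "b < K" "real a / real K \<le> r" "r \<le> (real a + 1) / real K"
      "real b / real K \<le> s" "s \<le> (real b + 1) / real K" "Q D n c r s = 0"
    unfolding Zs_def by blast
  have Kp: "real K > 0" using K by simp
  have lt: "real a / real K < (real a + 1) / real K" "real b / real K < (real b + 1) / real K"
    using Kp by (simp_all add: divide_strict_right_mono)
  show "p \<in> Bd D n c K \<union> {p. \<exists>m. n = Suc m \<and> nz D m (dc c) \<and> p \<in> Zs D m (dc c) K}"
  proof (cases "p \<in> Bd D n c K")
    case True then show ?thesis by blast
  next
    case nb: False
    have noedge: "Q D n c r' s' \<noteq> 0" if "real a / real K \<le> r'" "r' \<le> (real a + 1) / real K"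
      "real b / real K \<le> s'" "s' \<le> (real b + 1) / real K"
      "r' = real a / real K \<or> r' = (real a + 1) / real K \<or> s' = real b / real K \<or> s' = (real b + 1) / real K" for r' s'
      using nb that p(1-3) unfolding Bd_def by blast
    show ?thesis
    proof (cases "\<exists>m. n = Suc m \<and> nz D m (dc c)")
      case False
      then have "Q D n c (real a / real K) s = Q D n c r s"
        using Q_const0 Q_const by (cases n) auto
      then have "Q D n c (real a / real K) s = 0" using p by simp
      then have False using noedge[of "real a / real K" s] p lt by auto
      then show ?thesis ..
    next
      case True
      then obtain m where m: "n = Suc m" "nz D m (dc c)" by blast
      have "\<exists>r s. real a / real K \<le> r \<and> r \<le> (real a + 1) / real K \<and> real b / real K \<le> s
          \<and> s \<le> (real b + 1) / real K \<and> Q D m (dc c) r s = 0"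
        using crit[of _ _ _ _ "Q D n c" "Q D m (dc c)", OF lt Q_cont1 Q_cont2 Q_cont3 _ p(4-8)] noedge
          Q_deriv m(1) by blast
      then have "p \<in> Zs D m (dc c) K" using p(1-3) unfolding Zs_def by blast
      then show ?thesis using m by blast
    qed
  qed
qed

lemma finite_Zs: "finite (Zs D n c K)"
  by (rule finite_subset[of _ "{..<K} \<times> {..<K}"]) (auto simp: Zs_def)

lemma Zs_card:
  assumes K: "K \<ge> 1"
  shows "nz D n c \<Longrightarrow> card (Zs D n c K) \<le> (n + 1) * (10 * (D + n) * K)"
proof (induction n arbitrary: c)
  case 0
  have "Zs D 0 c K \<subseteq> Bd D 0 c K" using Zs_sub[OF K, of D 0 c] by auto
  then have "card (Zs D 0 c K) \<le> card (Bd D 0 c K)"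
    by (rule card_mono[rotated]) (rule finite_subset[of _ "{..<K} \<times> {..<K}"], auto simp: Bd_def)
  also have "\<dots> \<le> 10 * (D + 0) * K" by (rule Bd_card[OF K 0])
  finally show ?case by simp
next
  case (Suc m)
  define E where "E = (if nz D m (dc c) then Zs D m (dc c) K else {})"
  have sub: "Zs D (Suc m) c K \<subseteq> Bd D (Suc m) c K \<union> E" using Zs_sub[OF K, of D "Suc m" c]
    by (auto simp: E_def)
  have fB: "finite (Bd D (Suc m) c K)"
    by (rule finite_subset[of _ "{..<K} \<times> {..<K}"]) (auto simp: Bd_def)
  have fE: "finite E" by (simp add: E_def finite_Zs)
  have cE: "card E \<le> (m + 1) * (10 * (D + m) * K)"
    using Suc.IH by (simp add: E_def)
  have "card (Zs D (Suc m) c K) \<le> card (Bd D (Suc m) c K \<union> E)"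
    by (rule card_mono[OF _ sub]) (simp add: fB fE)
  also have "\<dots> \<le> card (Bd D (Suc m) c K) + card E" by (rule card_Un_le)
  also have "\<dots> \<le> 10 * (D + Suc m) * K + (m + 1) * (10 * (D + m) * K)"
    using Bd_card[OF K Suc.prems] cE by linarith
  also have "\<dots> \<le> 10 * (D + Suc m) * K + (m + 1) * (10 * (D + Suc m) * K)"
    by (intro add_mono le_refl mult_le_mono) auto
  also have "\<dots> = (Suc m + 1) * (10 * (D + Suc m) * K)" by (simp add: algebra_simps)
  finally show ?case .
qed

definition tri :: "(nat \<Rightarrow> nat \<Rightarrow> real) \<Rightarrow> nat \<Rightarrow> nat \<Rightarrow> real" where
  "tri c i j = (if i + j \<le> 100 then c i j else 0)"

lemma poly2_Q: "poly2 c r s = Q 100 100 (tri c) r s"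
  unfolding poly2_def Q_def
proof (rule sum.cong[OF refl])
  fix i :: nat assume i: "i \<in> {..100}"
  have "(\<Sum>j\<le>100. tri c i j * r ^ i * s ^ j) = (\<Sum>j\<le>100. if j \<in> {..100 - i} then c i j * r ^ i * s ^ j else 0)"
    by (rule sum.cong[OF refl]) (use i in \<open>auto simp: tri_def\<close>)
  also have "\<dots> = (\<Sum>j\<in>{..100} \<inter> {..100 - i}. c i j * r ^ i * s ^ j)"
    by (rule sum.inter_restrict[symmetric]) simp
  also have "{..100::nat} \<inter> {..100 - i} = {..100 - i}" by auto
  finally show "(\<Sum>j\<le>100 - i. c i j * r ^ i * s ^ j) = (\<Sum>j\<le>100. tri c i j * r ^ i * s ^ j)" by simp
qed

lemma pnorm_nz: assumes "pnorm c = 1" shows "nz 100 100 (tri c)"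
proof (rule ccontr)
  assume "\<not> nz 100 100 (tri c)"
  then have h: "\<forall>i\<le>100. \<forall>j\<le>100. tri c i j = 0" by (auto simp: nz_def)
  have "c i j = 0" if "i \<le> 100" "j \<le> 100 - i" for i j
  proof -
    have "j \<le> 100" using that by simp
    then have "tri c i j = 0" using h that(1) by blast
    then show ?thesis using that by (simp add: tri_def split: if_splits)
  qed
  then have "pnorm c = 0" unfolding pnorm_def by simp
  then show False using assms by simp
qed

lemma zero_squares_card:
  assumes K: "K \<ge> 1" and pn: "pnorm c = 1"
  shows "card {S\<in>Col K. \<exists>p\<in>S. poly2 c (fst p) (snd p) = 0} \<le> 202000 * K"
proof -
  have sub: "{S\<in>Col K. \<exists>p\<in>S. poly2 c (fst p) (snd p) = 0} \<subseteq> (\<lambda>(a,b). dyadic_square K a b) ` Zs 100 100 (tri c) K"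
  proof
    fix S assume "S \<in> {S\<in>Col K. \<exists>p\<in>S. poly2 c (fst p) (snd p) = 0}"
    then obtain a b p where "a < K" "b < K" "S = dyadic_square K a b" "p \<in> S" "poly2 c (fst p) (snd p) = 0"
      by (auto simp: Col_def)
    then have "(a,b) \<in> Zs 100 100 (tri c) K"
      unfolding Zs_def dyadic_square_def poly2_Q by (cases p) auto
    then show "S \<in> (\<lambda>(a,b). dyadic_square K a b) ` Zs 100 100 (tri c) K"
      using \<open>S = dyadic_square K a b\<close> by force
  qed
  have "card {S\<in>Col K. \<exists>p\<in>S. poly2 c (fst p) (snd p) = 0} \<le> card ((\<lambda>(a,b). dyadic_square K a b) ` Zs 100 100 (tri c) K)"
    by (rule card_mono[OF _ sub]) (simp add: finite_Zs)
  also have "\<dots> \<le> card (Zs 100 100 (tri c) K)" by (rule card_image_le[OF finite_Zs])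
  also have "\<dots> \<le> (100 + 1) * (10 * (100 + 100) * K)" by (rule Zs_card[OF K pnorm_nz[OF pn]])
  finally show ?thesis by simp
qed

lemma subseq_all:
  fixes F :: "'a \<Rightarrow> nat \<Rightarrow> real"
  assumes "finite A" "\<forall>a\<in>A. bounded (range (F a))"
  shows "\<exists>r. strict_mono r \<and> (\<forall>a\<in>A. convergent (F a \<circ> r))"
  using assms
proof (induction A rule: finite_induct)
  case empty
  show ?case by (rule exI[of _ id]) (simp add: strict_mono_def)
next
  case (insert a A)
  obtain r where r: "strict_mono r" "\<forall>b\<in>A. convergent (F b \<circ> r)"
    using insert.IH insert.prems by blast
  have "bounded (range (F a))" using insert.prems by simp
  then have "bounded (range (F a \<circ> r))"
    by (rule bounded_subset) auto
  then obtain l r2 where r2: "strict_mono r2" "((F a \<circ> r) \<circ> r2) \<longlonglongrightarrow> l"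
    using bounded_imp_convergent_subsequence by blast
  show ?case
  proof (intro exI conjI)
    show "strict_mono (r \<circ> r2)" using r(1) r2(1) by (rule strict_mono_o)
    show "\<forall>b\<in>insert a A. convergent (F b \<circ> (r \<circ> r2))"
    proof
      fix b assume "b \<in> insert a A"
      then show "convergent (F b \<circ> (r \<circ> r2))"
      proof
        assume "b = a" then show ?thesis using r2(2) by (auto simp: convergent_def o_assoc)
      next
        assume "b \<in> A"
        then obtain L where "(F b \<circ> r) \<longlonglongrightarrow> L" using r(2) by (auto simp: convergent_def)
        from LIMSEQ_subseq_LIMSEQ[OF this r2(1)] show ?thesis by (auto simp: convergent_def o_assoc)
      qed
    qed
  qed
qed

lemma coef_le_pnorm:
  assumes "i \<le> 100" "j \<le> 100 - i"
  shows "\<bar>c i j\<bar> \<le> pnorm c"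
proof -
  have "\<bar>c i j\<bar> \<le> (\<Sum>j\<le>100 - i. \<bar>c i j\<bar>)"
    by (rule member_le_sum) (use assms in auto)
  also have "\<dots> \<le> (\<Sum>i\<le>100. \<Sum>j\<le>100 - i. \<bar>c i j\<bar>)"
    by (rule member_le_sum[of i _ "\<lambda>i. \<Sum>j\<le>100 - i. \<bar>c i j\<bar>"]) (use assms in \<open>auto intro: sum_nonneg\<close>)
  finally show ?thesis by (simp add: pnorm_def)
qed

lemma Col_finite: "finite (Col K)"
proof -
  have "Col K \<subseteq> (\<lambda>(a,b). dyadic_square K a b) ` ({..<K} \<times> {..<K})" by (auto simp: Col_def)
  then show ?thesis by (rule finite_subset) simp
qed

lemma Col_coords:
  assumes "K \<ge> 1" "S \<in> Col K" "p \<in> S"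
  shows "\<bar>fst p\<bar> \<le> 1 \<and> \<bar>snd p\<bar> \<le> 1"
proof -
  obtain a b where ab: "a < K" "b < K" "S = dyadic_square K a b" using assms(2) by (auto simp: Col_def)
  have Kp: "real K > 0" using assms(1) by simp
  have "(real a + 1) / real K \<le> 1" "(real b + 1) / real K \<le> 1" using ab Kp by (simp_all add: divide_le_eq)
  moreover have "0 \<le> real a / real K" "0 \<le> real b / real K" by simp_all
  moreover obtain x y where xy: "p = (x,y)" by (cases p)
  moreover have "real a / real K \<le> x" "x \<le> (real a + 1) / real K" "real b / real K \<le> y" "y \<le> (real b + 1) / real K"
    using assms(3) ab(3) xy by (auto simp: dyadic_square_def)
  ultimately show ?thesis unfolding xy fst_conv snd_conv abs_le_iff by linarith
qed

lemma Col_closed: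
  assumes "S \<in> Col K" shows "closed S"
proof -
  obtain a b where "S = dyadic_square K a b" using assms by (auto simp: Col_def)
  then have "S = {real a / real K..(real a + 1) / real K} \<times> {real b / real K..(real b + 1) / real K}"
    by (auto simp: dyadic_square_def)
  then show ?thesis by (simp add: closed_Times)
qed



lemma main_k:
  assumes K: "K \<ge> 1"
  shows "\<exists>\<nu>::real. \<nu> > 0 \<and>
       (\<forall>C. C \<subseteq> Col K \<and> finite C \<and> real (card C) \<ge> 100000000 * real K \<longrightarrow> transverse \<nu> C)"
proof (rule ccontr)
  assume H: "\<not> ?thesis"
  have ex: "\<exists>c I. pnorm c = 1 \<and> I \<subseteq> Col K \<and> real (card I) \<ge> 1000000 * real K \<and>
      (\<forall>S\<in>I. \<exists>p\<in>S. \<bar>poly2 c (fst p) (snd p)\<bar> < 1 / (real n + 1))" for n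
  proof -
    have pos: "(1 / (real n + 1)::real) > 0" by simp
    have "\<not> (\<forall>C. C \<subseteq> Col K \<and> finite C \<and> real (card C) \<ge> 100000000 * real K \<longrightarrow> transverse (1 / (real n + 1)) C)"
    proof
      assume "\<forall>C. C \<subseteq> Col K \<and> finite C \<and> real (card C) \<ge> 100000000 * real K \<longrightarrow> transverse (1 / (real n + 1)) C"
      with pos have "\<exists>\<nu>::real. \<nu> > 0 \<and>
       (\<forall>C. C \<subseteq> Col K \<and> finite C \<and> real (card C) \<ge> 100000000 * real K \<longrightarrow> transverse \<nu> C)"
        by (intro exI[of _ "1 / (real n + 1)"] conjI)
      with H show False by (rule notE)
    qed
    then obtain C where C: "C \<subseteq> Col K" "finite C" "real (card C) \<ge> 100000000 * real K"
      "\<not> transverse (1 / (real n + 1)) C" by blast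
    have "real K \<ge> 1" using K by simp
    then have "100000000 * real K \<ge> (100000000::real)" by simp
    then have "real (card C) \<ge> 1000" using C(3) by linarith
    then have "card C \<ge> 1000" by linarith
    with C(2,4) obtain c I where cI: "pnorm c = 1" "I \<subseteq> C" "real (card I) \<ge> real (card C) / 100"
        "\<not> (\<exists>S\<in>I. \<forall>(r, s)\<in>S. \<bar>poly2 c r s\<bar> \<ge> 1 / (real n + 1))"
      unfolding transverse_def by blast
    have "\<forall>S\<in>I. \<exists>p\<in>S. \<bar>poly2 c (fst p) (snd p)\<bar> < 1 / (real n + 1)"
      proof
      fix S assume "S \<in> I"
      then obtain x where "x \<in> S" "\<not> (case x of (r, s) \<Rightarrow> \<bar>poly2 c r s\<bar> \<ge> 1 / (real n + 1))"
        using cI(4) by blast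
      then show "\<exists>p\<in>S. \<bar>poly2 c (fst p) (snd p)\<bar> < 1 / (real n + 1)"
        by (intro bexI[of _ x]) (auto simp: not_le split: prod.splits)
    qed
    moreover have "real (card I) \<ge> 1000000 * real K" using cI(3) C(3) by linarith
    ultimately show ?thesis using cI(1,2) C(1) by blast
  qed
  obtain cc II where ccII: "\<And>n. pnorm (cc n) = 1" "\<And>n. II n \<subseteq> Col K" "\<And>n. real (card (II n)) \<ge> 1000000 * real K"
    "\<And>n. \<forall>S\<in>II n. \<exists>p\<in>S. \<bar>poly2 (cc n) (fst p) (snd p)\<bar> < 1 / (real n + 1)"
  proof -
    from ex have "\<forall>n. \<exists>cI. pnorm (fst cI) = 1 \<and> snd cI \<subseteq> Col K \<and> real (card (snd cI)) \<ge> 1000000 * real K \<and>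
      (\<forall>S\<in>snd cI. \<exists>p\<in>S. \<bar>poly2 (fst cI) (fst p) (snd p)\<bar> < 1 / (real n + 1))" by simp
    then have "\<exists>g. \<forall>n. pnorm (fst (g n)) = 1 \<and> snd (g n) \<subseteq> Col K \<and> real (card (snd (g n))) \<ge> 1000000 * real K \<and>
      (\<forall>S\<in>snd (g n). \<exists>p\<in>S. \<bar>poly2 (fst (g n)) (fst p) (snd p)\<bar> < 1 / (real n + 1))"
      by (rule choice)
    then obtain g where "\<forall>n. pnorm (fst (g n)) = 1 \<and> snd (g n) \<subseteq> Col K \<and> real (card (snd (g n))) \<ge> 1000000 * real K \<and>
      (\<forall>S\<in>snd (g n). \<exists>p\<in>S. \<bar>poly2 (fst (g n)) (fst p) (snd p)\<bar> < 1 / (real n + 1))" by blast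
    then show ?thesis using that[of "\<lambda>n. fst (g n)" "\<lambda>n. snd (g n)"] by blast
  qed
  have "\<forall>n. \<exists>f. \<forall>S. S \<in> II n \<longrightarrow> f S \<in> S \<and> \<bar>poly2 (cc n) (fst (f S)) (snd (f S))\<bar> < 1 / (real n + 1)"
  proof
    fix n
    have "\<forall>S. \<exists>p. S \<in> II n \<longrightarrow> p \<in> S \<and> \<bar>poly2 (cc n) (fst p) (snd p)\<bar> < 1 / (real n + 1)"
      using ccII(4)[of n] by blast
    then show "\<exists>f. \<forall>S. S \<in> II n \<longrightarrow> f S \<in> S \<and> \<bar>poly2 (cc n) (fst (f S)) (snd (f S))\<bar> < 1 / (real n + 1)"
      by (rule choice)
  qed
  then have "\<exists>pp. \<forall>n S. S \<in> II n \<longrightarrow> pp n S \<in> S \<and> \<bar>poly2 (cc n) (fst (pp n S)) (snd (pp n S))\<bar> < 1 / (real n + 1)"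
    by (rule choice)
  then obtain pp where pp: "\<And>n S. S \<in> II n \<Longrightarrow> pp n S \<in> S \<and> \<bar>poly2 (cc n) (fst (pp n S)) (snd (pp n S))\<bar> < 1 / (real n + 1)"
    by blast
  have "range II \<subseteq> Pow (Col K)" using ccII(2) by blast
  moreover have "finite (Pow (Col K))" using Col_finite by simp
  ultimately have fr: "finite (range II)" by (rule finite_subset)
  obtain I0 where "I0 \<in> range II" and inf: "infinite (II -` {I0})"
    by (rule inf_img_fin_domE[OF fr infinite_UNIV_nat])
  obtain r1 :: "nat \<Rightarrow> nat" where r1a: "strict_mono r1" and r1b: "\<forall>n. r1 n \<in> II -` {I0}"
    using infinite_enumerate[OF inf] by auto
  have r1: "strict_mono r1" "\<And>n. II (r1 n) = I0" using r1a r1b by auto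
  have I0C: "I0 \<subseteq> Col K" using ccII(2)[of "r1 0"] r1(2) by simp
  have fI0: "finite I0" using I0C Col_finite finite_subset by blast
  define T where "T = Sigma {..100::nat} (\<lambda>i. {..100 - i})"
  define F :: "(nat \<times> nat) + ((real \<times> real) set \<times> bool) \<Rightarrow> nat \<Rightarrow> real" where
    "F x n = (case x of Inl ij \<Rightarrow> cc (r1 n) (fst ij) (snd ij)
       | Inr Sb \<Rightarrow> (if snd Sb then fst (pp (r1 n) (fst Sb)) else snd (pp (r1 n) (fst Sb))))" for x n
  define A :: "((nat \<times> nat) + ((real \<times> real) set \<times> bool)) set" where "A = Inl ` T \<union> Inr ` (I0 \<times> (UNIV :: bool set))"
  have fA: "finite A" unfolding A_def T_def using fI0 by simp
  have bA: "\<forall>a\<in>A. bounded (range (F a))"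
  proof
    fix a assume "a \<in> A"
    then consider (l) i j where "a = Inl (i,j)" "i \<le> 100" "j \<le> 100 - i"
      | (r) S b where "a = Inr (S,b)" "S \<in> I0" unfolding A_def T_def by auto
    then show "bounded (range (F a))"
    proof cases
      case l
      have "\<forall>x\<in>range (F a). \<bar>x\<bar> \<le> 1"
        using coef_le_pnorm[OF l(2,3)] ccII(1) by (auto simp: F_def l(1)) (metis (no_types))
      then show ?thesis unfolding bounded_real by blast
    next
      case r
      have "pp (r1 n) S \<in> S" for n using pp[of S "r1 n"] r1(2) r(2) by simp
      then have "\<bar>fst (pp (r1 n) S)\<bar> \<le> 1 \<and> \<bar>snd (pp (r1 n) S)\<bar> \<le> 1" for n
        using Col_coords[OF K] I0C r(2) by blast
      then have "\<forall>x\<in>range (F a). \<bar>x\<bar> \<le> 1" by (auto simp: F_def r(1))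
      then show ?thesis unfolding bounded_real by blast
    qed
  qed
  obtain r where r: "strict_mono r" "\<forall>a\<in>A. convergent (F a \<circ> r)"
    using subseq_all[OF fA bA] by blast
  define sq where "sq = r1 \<circ> r"
  have sq_mono: "strict_mono sq" unfolding sq_def using r1(1) r(1) by (rule strict_mono_o)
  have sqI: "II (sq m) = I0" for m by (simp add: sq_def r1(2))
  define cs where "cs i j = lim (\<lambda>m. cc (sq m) i j)" for i j
  define ps where "ps S = (lim (\<lambda>m. fst (pp (sq m) S)), lim (\<lambda>m. snd (pp (sq m) S)))" for S
  have cconv: "(\<lambda>m. cc (sq m) i j) \<longlonglongrightarrow> cs i j" if "i \<le> 100" "j \<le> 100 - i" for i j
  proof -
    have "Inl (i,j) \<in> A" using that by (auto simp: A_def T_def)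
    then have "convergent (F (Inl (i,j)) \<circ> r)" using r(2) by blast
    then have "convergent (\<lambda>m. cc (sq m) i j)" by (simp add: F_def sq_def o_def)
    then show ?thesis by (simp add: cs_def convergent_LIMSEQ_iff)
  qed
  have pconv: "(\<lambda>m. pp (sq m) S) \<longlonglongrightarrow> ps S" if "S \<in> I0" for S
  proof -
    have "Inr (S,True) \<in> A" "Inr (S,False) \<in> A" using that by (auto simp: A_def)
    then have "convergent (F (Inr (S,True)) \<circ> r)" "convergent (F (Inr (S,False)) \<circ> r)" using r(2) by blast+
    then have "convergent (\<lambda>m. fst (pp (sq m) S))" "convergent (\<lambda>m. snd (pp (sq m) S))"
      by (simp_all add: F_def sq_def o_def)
    then have "(\<lambda>m. (fst (pp (sq m) S), snd (pp (sq m) S))) \<longlonglongrightarrow> ps S"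
      unfolding ps_def by (intro tendsto_Pair) (simp_all add: convergent_LIMSEQ_iff)
    then show ?thesis by simp
  qed
  have "(\<lambda>m. pnorm (cc (sq m))) \<longlonglongrightarrow> pnorm cs"
    unfolding pnorm_def by (intro tendsto_sum tendsto_rabs cconv) auto
  then have pn: "pnorm cs = 1" using ccII(1) by (simp add: LIMSEQ_const_iff)
  have zero: "\<exists>p\<in>S. poly2 cs (fst p) (snd p) = 0" if S: "S \<in> I0" for S
  proof
    have inS: "pp (sq m) S \<in> S" for m using pp[of S "sq m"] sqI S by simp
    show "ps S \<in> S"
      by (rule closed_sequentially[OF Col_closed inS pconv[OF S]]) (use I0C S in blast)
    have t1: "(\<lambda>m. poly2 (cc (sq m)) (fst (pp (sq m) S)) (snd (pp (sq m) S))) \<longlonglongrightarrow> poly2 cs (fst (ps S)) (snd (ps S))"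
      unfolding poly2_def using pconv[OF S]
      by (intro tendsto_sum tendsto_mult tendsto_power cconv tendsto_fst tendsto_snd) auto
    have t2: "(\<lambda>m. poly2 (cc (sq m)) (fst (pp (sq m) S)) (snd (pp (sq m) S))) \<longlonglongrightarrow> 0"
    proof (rule Lim_null_comparison)
      show "\<forall>\<^sub>F m in sequentially. norm (poly2 (cc (sq m)) (fst (pp (sq m) S)) (snd (pp (sq m) S))) \<le> inverse (real (Suc m))"
      proof (rule always_eventually, rule allI)
        fix m
        have "\<bar>poly2 (cc (sq m)) (fst (pp (sq m) S)) (snd (pp (sq m) S))\<bar> < 1 / (real (sq m) + 1)"
          using pp[of S "sq m"] sqI S by simp
        also have "\<dots> \<le> 1 / (real m + 1)"
          using seq_suble[OF sq_mono, of m] by (intro divide_left_mono) auto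
        finally show "norm (poly2 (cc (sq m)) (fst (pp (sq m) S)) (snd (pp (sq m) S))) \<le> inverse (real (Suc m))"
          by (simp add: inverse_eq_divide add.commute)
      qed
      show "(\<lambda>m. inverse (real (Suc m))) \<longlonglongrightarrow> 0" by (rule LIMSEQ_inverse_real_of_nat)
    qed
    show "poly2 cs (fst (ps S)) (snd (ps S)) = 0" using LIMSEQ_unique[OF t1 t2] .
  qed
  have "I0 \<subseteq> {S\<in>Col K. \<exists>p\<in>S. poly2 cs (fst p) (snd p) = 0}" using I0C zero by blast
  then have "card I0 \<le> card {S\<in>Col K. \<exists>p\<in>S. poly2 cs (fst p) (snd p) = 0}"
    by (rule card_mono[rotated]) (simp add: Col_finite)
  also have "\<dots> \<le> 202000 * K" by (rule zero_squares_card[OF K pn])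
  finally have "real (card I0) \<le> 202000 * real K" by (simp add: of_nat_mult[symmetric] del: of_nat_mult)
  moreover have "real (card I0) \<ge> 1000000 * real K" using ccII(3)[of "r1 0"] r1(2) by simp
  moreover have "real K \<ge> 1" using K by simp
  ultimately show False by linarith
qed

theorem lemma6p3:
  shows "\<exists>\<Lambda>::real. \<Lambda> > 0 \<and>
    (\<forall>k::nat. \<exists>\<nu>::real. \<nu> > 0 \<and>
       (\<forall>C. C \<subseteq> Col (2 ^ k) \<and> finite C \<and> real (card C) \<ge> \<Lambda> * real ((2::nat) ^ k)
             \<longrightarrow> transverse \<nu> C))"
proof (rule exI[of _ "100000000"], intro conjI allI)
  show "(0::real) < 100000000" by simp
  fix k :: nat
  have "(2::nat) ^ k \<ge> 1" by simp
  from main_k[OF this] show "\<exists>\<nu>::real. \<nu> > 0 \<and>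
       (\<forall>C. C \<subseteq> Col (2 ^ k) \<and> finite C \<and> real (card C) \<ge> 100000000 * real ((2::nat) ^ k)
             \<longrightarrow> transverse \<nu> C)" by simp
qed

end
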